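(* Let $X$ be a connected weighted bipartite graph with vertex $u$ such that $0\in\Phi_{\mathbf e_u}$ and $(E_0)_{u,u}<\frac12$. If one of the following holds, then $u$ is not sedentary: (1) $|\Phi_{\mathbf e_u}\cap\mathbb R^+|=1$; (2) $|\Phi_{\mathbf e_u}\cap\mathbb R^+|\ge2$ and either (i) $\Phi_{\mathbf e_u}\cap\mathbb R^+$ consists of integers all having the same exponent of $2$ in their prime factorizations, or (ii) $\Phi_{\mathbf e_u}\cap\mathbb R^+$ is linearly independent over $\mathbb Q$.
   Context: Graphs are simple, connected, undirected, with nonzero real edge weights; $A=A(X)=\sum_\lambda\lambda E_\lambda$ is the spectral decomposition of the weighted adjacency matrix over its distinct eigenvalues, $E_\lambda$ the orthogonal projection onto the $\lambda$-eigenspace; $\Phi_{\mathbf e_u}=\{\lambda:E_\lambda\mathbf e_u\ne0\}$. With $U(t)=e^{itA}$, $u$ is not sedentary if $\inf_{t>0}|U(t)_{u,u}|=0$. *)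

theory Defs
  imports "HOL-Analysis.Analysis" "HOL-Computational_Algebra.Factorial_Ring"
begin

(* A weighted simple undirected graph on the finite vertex type 'n, given by
   its weighted adjacency matrix: symmetric, zero diagonal; edges = nonzero entries. *)
definition weighted_graph :: "real^'n^'n \<Rightarrow> bool" where
  "weighted_graph A \<longleftrightarrow> (\<forall>i j. A $ i $ j = A $ j $ i) \<and> (\<forall>i. A $ i $ i = 0)"

definition graph_connected :: "real^'n^'n \<Rightarrow> bool" where
  "graph_connected A \<longleftrightarrow> (\<forall>i j. (\<lambda>x y. A $ x $ y \<noteq> 0)\<^sup>*\<^sup>* i j)"

definition graph_bipartite :: "real^'n^'n \<Rightarrow> bool" where
  "graph_bipartite A \<longleftrightarrow> (\<exists>S. \<forall>i j. A $ i $ j \<noteq> 0 \<longrightarrow> (i \<in> S \<longleftrightarrow> j \<notin> S))"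

definition eigenspace :: "real^'n^'n \<Rightarrow> real \<Rightarrow> (real^'n) set" where
  "eigenspace A \<mu> = {v. A *v v = \<mu> *\<^sub>R v}"

(* E_lambda: the orthogonal projection onto the lambda-eigenspace (the zero matrix
   if lambda is not an eigenvalue) *)
definition eproj :: "real^'n^'n \<Rightarrow> real \<Rightarrow> real^'n^'n" where
  "eproj A \<mu> = matrix (\<lambda>x. THE y. y \<in> eigenspace A \<mu> \<and>
      (\<forall>z\<in>eigenspace A \<mu>. inner (x - y) z = 0))"

definition eig_support :: "real^'n^'n \<Rightarrow> 'n \<Rightarrow> real set" where
  "eig_support A u = {\<mu>. eproj A \<mu> *v axis u 1 \<noteq> 0}"

primrec mpow :: "real^'n^'n \<Rightarrow> nat \<Rightarrow> real^'n^'n" where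
  "mpow A 0 = mat 1"
| "mpow A (Suc k) = A ** mpow A k"

(* U(t)_{u,v} = (e^{itA})_{u,v}, via the exponential series *)
definition transition :: "real^'n^'n \<Rightarrow> real \<Rightarrow> 'n \<Rightarrow> 'n \<Rightarrow> complex" where
  "transition A t u v = (\<Sum>k. (\<i> * complex_of_real t) ^ k / fact k * complex_of_real (mpow A k $ u $ v))"

definition sedentary :: "real^'n^'n \<Rightarrow> 'n \<Rightarrow> bool" where
  "sedentary A u \<longleftrightarrow> \<not> ((INF t\<in>{0<..}. cmod (transition A t u u)) = 0)"

end

theory Submission
  imports Defs
begin

definition prj :: "'a::euclidean_space set \<Rightarrow> 'a \<Rightarrow> 'a" where
  "prj S x = (THE y. y \<in> S \<and> (\<forall>z\<in>S. inner (x - y) z = 0))"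

lemma prj_ex1:
  fixes S :: "'a::euclidean_space set"
  assumes "subspace S"
  shows "\<exists>!y. y \<in> S \<and> (\<forall>z\<in>S. inner (x - y) z = 0)"
proof -
  obtain y z where y: "y \<in> span S" and z: "\<And>w. w \<in> span S \<Longrightarrow> orthogonal z w" and xyz: "x = y + z"
    using orthogonal_subspace_decomp_exists[of S x] by blast
  have sp: "span S = S" using assms by (simp add: span_eq_iff)
  have ex1: "y \<in> S" using y sp by simp
  have ex2: "\<forall>w\<in>S. inner (x - y) w = 0"
  proof
    fix w assume "w \<in> S"
    then have "orthogonal z w" using z sp by simp
    moreover have "x - y = z" using xyz by simp
    ultimately show "inner (x - y) w = 0" by (simp add: orthogonal_def)
  qed
  show ?thesis
  proof (rule ex1I[of _ y])
    show "y \<in> S \<and> (\<forall>w\<in>S. inner (x - y) w = 0)" using ex1 ex2 by blast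
  next
    fix y2 assume h: "y2 \<in> S \<and> (\<forall>w\<in>S. inner (x - y2) w = 0)"
    have d: "y2 - y \<in> S" using h ex1 assms by (simp add: subspace_diff)
    have e1: "inner (x - y) (y2 - y) = 0" using ex2 d by blast
    have e2: "inner (x - y2) (y2 - y) = 0" using h d by blast
    have "inner (y2 - y) (y2 - y) = inner (x - y) (y2 - y) - inner (x - y2) (y2 - y)"
      by (simp add: inner_diff_left)
    also have "\<dots> = 0" using e1 e2 by simp
    finally show "y2 = y" by simp
  qed
qed

lemma prj_props:
  fixes S :: "'a::euclidean_space set"
  assumes "subspace S"
  shows "prj S x \<in> S" "\<And>z. z \<in> S \<Longrightarrow> inner (x - prj S x) z = 0"
proof -
  have "prj S x \<in> S \<and> (\<forall>z\<in>S. inner (x - prj S x) z = 0)"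
    unfolding prj_def by (rule theI'[OF prj_ex1[OF assms]])
  then show "prj S x \<in> S" "\<And>z. z \<in> S \<Longrightarrow> inner (x - prj S x) z = 0" by blast+
qed


lemma prj_unique:
  fixes S :: "'a::euclidean_space set"
  assumes "subspace S" "y \<in> S" "\<And>z. z \<in> S \<Longrightarrow> inner (x - y) z = 0"
  shows "prj S x = y"
proof -
  have "y \<in> S \<and> (\<forall>z\<in>S. inner (x - y) z = 0)" using assms(2,3) by blast
  moreover have "prj S x \<in> S \<and> (\<forall>z\<in>S. inner (x - prj S x) z = 0)"
    using prj_props[OF assms(1)] by blast
  ultimately show ?thesis using prj_ex1[OF assms(1), of x] by blast
qed

lemma prj_linear:
  fixes S :: "'a::euclidean_space set"
  assumes S: "subspace S"
  shows "linear (prj S)"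
proof (rule linearI)
  fix x y
  show "prj S (x + y) = prj S x + prj S y"
  proof (rule prj_unique[OF S])
    show "prj S x + prj S y \<in> S" using prj_props(1)[OF S] S by (simp add: subspace_add)
    fix z assume z: "z \<in> S"
    have "inner (x + y - (prj S x + prj S y)) z = inner (x - prj S x) z + inner (y - prj S y) z"
      by (simp add: algebra_simps inner_add_left inner_diff_left)
    also have "\<dots> = 0" using prj_props(2)[OF S] z by simp
    finally show "inner (x + y - (prj S x + prj S y)) z = 0" .
  qed
next
  fix c :: real and x
  show "prj S (c *\<^sub>R x) = c *\<^sub>R prj S x"
  proof (rule prj_unique[OF S])
    show "c *\<^sub>R prj S x \<in> S" using prj_props(1)[OF S] S by (simp add: subspace_scale)
    fix z assume z: "z \<in> S"
    have "inner (c *\<^sub>R x - c *\<^sub>R prj S x) z = c * inner (x - prj S x) z"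
      by (simp add: algebra_simps inner_diff_left)
    also have "\<dots> = 0" using prj_props(2)[OF S] z by simp
    finally show "inner (c *\<^sub>R x - c *\<^sub>R prj S x) z = 0" .
  qed
qed

lemma prj_self_inner:
  fixes S :: "'a::euclidean_space set"
  assumes "subspace S"
  shows "inner x (prj S x) = inner (prj S x) (prj S x)"
proof -
  have "inner (x - prj S x) (prj S x) = 0" using prj_props[OF assms] by blast
  then show ?thesis by (simp add: inner_diff_left)
qed

lemma subspace_eigenspace: "subspace (eigenspace A \<mu>)"
  unfolding subspace_def eigenspace_def
proof (intro conjI allI impI ballI)
  show "0 \<in> {v. A *v v = \<mu> *\<^sub>R v}" by simp
next
  fix x y assume "x \<in> {v. A *v v = \<mu> *\<^sub>R v}" "y \<in> {v. A *v v = \<mu> *\<^sub>R v}"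
  then show "x + y \<in> {v. A *v v = \<mu> *\<^sub>R v}"
    by (simp add: matrix_vector_right_distrib scaleR_right_distrib)
next
  fix c :: real and x assume "x \<in> {v. A *v v = \<mu> *\<^sub>R v}"
  then show "c *\<^sub>R x \<in> {v. A *v v = \<mu> *\<^sub>R v}"
    by (simp add: matrix_vector_mult_scaleR)
qed

lemma eproj_eq: "eproj A \<mu> = matrix (prj (eigenspace A \<mu>))"
  unfolding eproj_def prj_def ..

lemma eproj_mult: "eproj A \<mu> *v x = prj (eigenspace A \<mu>) x"
proof -
  have "linear (prj (eigenspace A \<mu>))" by (rule prj_linear[OF subspace_eigenspace])
  then have "(\<lambda>x. matrix (prj (eigenspace A \<mu>)) *v x) = prj (eigenspace A \<mu>)"
    by (rule matrix_vector_mul(2))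
  then show ?thesis unfolding eproj_eq by metis
qed

lemma sym_inner:
  fixes A :: "real^'n^'n"
  assumes "\<And>i j. A $ i $ j = A $ j $ i"
  shows "inner (A *v x) y = inner x (A *v y)"
proof -
  have "x v* A = A *v x"
    unfolding vector_matrix_mult_def matrix_vector_mult_def using assms
    by (simp add: mult.commute)
  then show ?thesis using dot_lmul_matrix[of x A y] by simp
qed

lemma quad_zero:
  fixes b c :: real
  assumes "\<And>s. 2 * s * b + s^2 * c \<le> 0"
  shows "b = 0"
proof -
  define t where "t = 1 / (\<bar>c\<bar> + 1)"
  have t0: "t > 0" unfolding t_def by simp
  have tc: "t * \<bar>c\<bar> < 1" unfolding t_def by (simp add: field_simps)
  have "2 * (t*b) * b + (t*b)^2 * c \<le> 0" by (rule assms)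
  then have "t * b^2 * (2 + t * c) \<le> 0" by (simp add: power2_eq_square algebra_simps)
  moreover have "2 + t * c > 0"
  proof -
    have "t * (- c) \<le> t * \<bar>c\<bar>" using t0 abs_ge_minus_self[of c] by (intro mult_left_mono) auto
    then show ?thesis using tc by linarith
  qed
  ultimately have "t * b^2 \<le> 0" by (simp add: mult_le_0_iff)
  then have "b^2 \<le> 0" using t0 by (simp add: mult_le_0_iff)
  then show ?thesis by simp
qed

lemma ex_eigvec:
  fixes A :: "real^'n^'n"
  assumes sym: "\<And>i j. A $ i $ j = A $ j $ i"
    and W: "subspace W" and inv: "\<And>x. x \<in> W \<Longrightarrow> A *v x \<in> W"
    and ne: "w \<in> W" "w \<noteq> 0"
  shows "\<exists>x\<in>W. x \<noteq> 0 \<and> (\<exists>l. A *v x = l *\<^sub>R x)"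
proof -
  define K where "K = W \<inter> sphere 0 1"
  define q where "q x = inner x (A *v x)" for x
  have cK: "compact K" unfolding K_def using closed_subspace[OF W] by (intro closed_Int_compact) auto
  have w1: "(1 / norm w) *\<^sub>R w \<in> K" unfolding K_def using ne W by (simp add: subspace_scale)
  have cq: "continuous_on K q" unfolding q_def
    by (intro continuous_on_inner continuous_on_id linear_continuous_on matrix_vector_mul_bounded_linear)
  obtain x0 where x0K: "x0 \<in> K" and x0max: "\<And>y. y \<in> K \<Longrightarrow> q y \<le> q x0"
    using continuous_attains_sup[OF cK _ cq] w1 by blast
  define l where "l = q x0"
  have x0W: "x0 \<in> W" and nx0: "norm x0 = 1" using x0K unfolding K_def by auto
  have x0x0: "inner x0 x0 = 1" using nx0 by (simp add: norm_eq_sqrt_inner)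
  have H: "q x \<le> l * inner x x" if xW: "x \<in> W" for x
  proof (cases "x = 0")
    case True then show ?thesis by (simp add: q_def)
  next
    case False
    define y where "y = (1 / norm x) *\<^sub>R x"
    have "y \<in> K" unfolding K_def y_def using xW False W by (simp add: subspace_scale)
    then have "q y \<le> l" using x0max l_def by simp
    moreover have "q y = q x / (norm x)^2" unfolding q_def y_def
      by (simp add: matrix_vector_mult_scaleR power2_eq_square)
    moreover have "inner x x = (norm x)^2" by (simp add: power2_norm_eq_inner)
    moreover have "norm x > 0" using False by simp
    ultimately show ?thesis by (simp add: field_simps)
  qed
  define y where "y = A *v x0 - l *\<^sub>R x0"
  have yW: "y \<in> W" unfolding y_def using inv[OF x0W] x0W W by (simp add: subspace_diff subspace_scale)
  have "2 * s * inner y y + s^2 * (q y - l * inner y y) \<le> 0" for s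
  proof -
    have "x0 + s *\<^sub>R y \<in> W" using x0W yW W by (simp add: subspace_add subspace_scale)
    from H[OF this] have h: "q (x0 + s *\<^sub>R y) \<le> l * inner (x0 + s *\<^sub>R y) (x0 + s *\<^sub>R y)" .
    have s1: "inner y (A *v x0) = inner (A *v y) x0" using sym_inner[of A y x0, OF sym] by (simp add: inner_commute)
    have "q (x0 + s *\<^sub>R y) = q x0 + s * inner x0 (A *v y) + s * inner y (A *v x0) + s^2 * q y"
      unfolding q_def by (simp add: matrix_vector_right_distrib matrix_vector_mult_scaleR inner_add_left inner_add_right power2_eq_square algebra_simps)
    also have "\<dots> = l + 2 * s * inner y (A *v x0) + s^2 * q y"
      using s1 l_def by (simp add: inner_commute)
    finally have e1: "q (x0 + s *\<^sub>R y) = l + 2 * s * inner y (A *v x0) + s^2 * q y" .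
    have e2: "inner (x0 + s *\<^sub>R y) (x0 + s *\<^sub>R y) = 1 + 2 * s * inner y x0 + s^2 * inner y y"
      using x0x0 by (simp add: inner_add_left inner_add_right power2_eq_square algebra_simps inner_commute)
    have "inner y y = inner y (A *v x0) - l * inner y x0" unfolding y_def
      by (simp add: inner_diff_right)
    then have ya: "inner y (A *v x0) = inner y y + l * inner y x0" by simp
    have i: "l + 2 * s * inner y (A *v x0) + s^2 * q y \<le> l * (1 + 2 * s * inner y x0 + s^2 * inner y y)"
      using h unfolding e1 e2 .
    show ?thesis using i unfolding ya by (simp add: algebra_simps)
  qed
  then have "inner y y = 0" by (rule quad_zero)
  then have "y = 0" by simp
  then have "A *v x0 = l *\<^sub>R x0" unfolding y_def by simp
  moreover have "x0 \<noteq> 0" using nx0 by auto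
  ultimately show ?thesis using x0W by blast
qed

definition Lam :: "real^'n^'n \<Rightarrow> real set" where
  "Lam A = {\<mu>. eigenspace A \<mu> \<noteq> {0}}"

lemma eig_orth:
  fixes A :: "real^'n^'n"
  assumes sym: "\<And>i j. A $ i $ j = A $ j $ i"
    and v: "v \<in> eigenspace A \<mu>" and w: "w \<in> eigenspace A \<nu>" and ne: "\<mu> \<noteq> \<nu>"
  shows "inner v w = 0"
proof -
  have "\<mu> * inner v w = inner (A *v v) w" using v by (simp add: eigenspace_def)
  also have "\<dots> = inner v (A *v w)" by (rule sym_inner[OF sym])
  also have "\<dots> = \<nu> * inner v w" using w by (simp add: eigenspace_def)
  finally show ?thesis using ne by simp
qed

lemma finite_Lam:
  fixes A :: "real^'n^'n"
  assumes sym: "\<And>i j. A $ i $ j = A $ j $ i"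
  shows "finite (Lam A)"
proof -
  define ev where "ev \<mu> = (SOME v. v \<in> eigenspace A \<mu> \<and> v \<noteq> 0)" for \<mu>
  have evp: "ev \<mu> \<in> eigenspace A \<mu> \<and> ev \<mu> \<noteq> 0" if "\<mu> \<in> Lam A" for \<mu>
  proof -
    have "\<exists>v. v \<in> eigenspace A \<mu> \<and> v \<noteq> 0" using that subspace_0[OF subspace_eigenspace[of A \<mu>]]
      unfolding Lam_def by blast
    then show ?thesis unfolding ev_def by (rule someI_ex)
  qed
  have inj: "inj_on ev (Lam A)"
  proof (rule inj_onI)
    fix \<mu> \<nu> assume m: "\<mu> \<in> Lam A" and n: "\<nu> \<in> Lam A" and e: "ev \<mu> = ev \<nu>"
    show "\<mu> = \<nu>"
    proof (rule ccontr)
      assume "\<mu> \<noteq> \<nu>"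
      then have "inner (ev \<mu>) (ev \<nu>) = 0" using eig_orth[OF sym] evp[OF m] evp[OF n] by blast
      then show False using e evp[OF n] by simp
    qed
  qed
  have "pairwise orthogonal (ev ` Lam A)"
    unfolding pairwise_def orthogonal_def
  proof (intro ballI impI)
    fix x y assume "x \<in> ev ` Lam A" "y \<in> ev ` Lam A" "x \<noteq> y"
    then obtain \<mu> \<nu> where "\<mu> \<in> Lam A" "\<nu> \<in> Lam A" "x = ev \<mu>" "y = ev \<nu>" "\<mu> \<noteq> \<nu>" by blast
    then show "inner x y = 0" using eig_orth[OF sym] evp by blast
  qed
  moreover have "0 \<notin> ev ` Lam A" using evp by fastforce
  ultimately have "independent (ev ` Lam A)" by (rule pairwise_orthogonal_independent)
  then have "finite (ev ` Lam A)" by (rule independent_imp_finite)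
  then show ?thesis using inj by (simp add: finite_image_iff)
qed

lemma not_Lam_prj:
  assumes "\<mu> \<notin> Lam A"
  shows "prj (eigenspace A \<mu>) x = 0"
  using prj_props(1)[OF subspace_eigenspace, of A \<mu> x] assms unfolding Lam_def by auto

lemma spectral_complete:
  fixes A :: "real^'n^'n"
  assumes sym: "\<And>i j. A $ i $ j = A $ j $ i"
  shows "(\<Sum>\<mu>\<in>Lam A. prj (eigenspace A \<mu>) x) = x"
proof -
  define r where "r = x - (\<Sum>\<mu>\<in>Lam A. prj (eigenspace A \<mu>) x)"
  define W where "W = {w. \<forall>\<nu>. \<forall>v\<in>eigenspace A \<nu>. inner w v = 0}"
  have fin: "finite (Lam A)" by (rule finite_Lam[OF sym])
  have rW: "r \<in> W" unfolding W_def
  proof (intro CollectI allI ballI)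
    fix \<nu> v assume v: "v \<in> eigenspace A \<nu>"
    show "inner r v = 0"
    proof (cases "\<nu> \<in> Lam A")
      case False
      then have "v = 0" using v subspace_0[OF subspace_eigenspace[of A \<nu>]] unfolding Lam_def by blast
      then show ?thesis by simp
    next
      case True
      have z: "inner (prj (eigenspace A \<mu>) x) v = 0" if "\<mu> \<in> Lam A - {\<nu>}" for \<mu>
        using eig_orth[OF sym prj_props(1)[OF subspace_eigenspace] v] that by blast
      have "inner (\<Sum>\<mu>\<in>Lam A. prj (eigenspace A \<mu>) x) v = (\<Sum>\<mu>\<in>Lam A. inner (prj (eigenspace A \<mu>) x) v)"
        by (simp add: inner_sum_left)
      also have "\<dots> = inner (prj (eigenspace A \<nu>) x) v + (\<Sum>\<mu>\<in>Lam A - {\<nu>}. inner (prj (eigenspace A \<mu>) x) v)"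
        using fin True by (simp add: sum.remove)
      also have "\<dots> = inner (prj (eigenspace A \<nu>) x) v" using z by simp
      finally have "inner r v = inner (x - prj (eigenspace A \<nu>) x) v"
        unfolding r_def by (simp add: inner_diff_left)
      also have "\<dots> = 0" using prj_props(2)[OF subspace_eigenspace v] .
      finally show ?thesis .
    qed
  qed
  have sW: "subspace W" unfolding W_def subspace_def
    by (auto simp: inner_add_left)
  have iW: "A *v w \<in> W" if "w \<in> W" for w
    unfolding W_def
  proof (intro CollectI allI ballI)
    fix \<nu> v assume v: "v \<in> eigenspace A \<nu>"
    have "inner (A *v w) v = inner w (A *v v)" by (rule sym_inner[OF sym])
    also have "\<dots> = \<nu> * inner w v" using v by (simp add: eigenspace_def)
    also have "\<dots> = 0" using that v unfolding W_def by simp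
    finally show "inner (A *v w) v = 0" .
  qed
  have "r = 0"
  proof (rule ccontr)
    assume "r \<noteq> 0"
    then obtain y l where y: "y \<in> W" "y \<noteq> 0" "A *v y = l *\<^sub>R y"
      using ex_eigvec[OF sym sW iW rW] by blast
    then have "y \<in> eigenspace A l" by (simp add: eigenspace_def)
    then have "inner y y = 0" using y(1) unfolding W_def by blast
    then show False using y(2) by simp
  qed
  then show ?thesis unfolding r_def by simp
qed

lemma mv_sum: "A *v (\<Sum>i\<in>S. f i) = (\<Sum>i\<in>S. A *v f i)"
  by (induct S rule: infinite_finite_induct) (auto simp: matrix_vector_right_distrib)

definition pp :: "real^'n^'n \<Rightarrow> 'n \<Rightarrow> real \<Rightarrow> real" where
  "pp A u \<mu> = eproj A \<mu> $ u $ u"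

lemma pp_prj: "pp A u \<mu> = prj (eigenspace A \<mu>) (axis u 1) $ u"
proof -
  have "(eproj A \<mu> *v axis u 1) $ u = eproj A \<mu> $ u $ u"
    by (simp add: matrix_vector_mult_basis column_def)
  then show ?thesis unfolding pp_def eproj_mult by simp
qed

lemma pp_norm: "pp A u \<mu> = inner (prj (eigenspace A \<mu>) (axis u 1)) (prj (eigenspace A \<mu>) (axis u 1))"
proof -
  have "pp A u \<mu> = inner (axis u 1) (prj (eigenspace A \<mu>) (axis u 1))"
    unfolding pp_prj by (simp add: inner_axis')
  then show ?thesis using prj_self_inner[OF subspace_eigenspace] by simp
qed

lemma pp_nonneg: "pp A u \<mu> \<ge> 0"
  unfolding pp_norm by simp

lemma eig_support_pp: "\<mu> \<in> eig_support A u \<longleftrightarrow> pp A u \<mu> \<noteq> 0"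
  unfolding eig_support_def pp_norm eproj_mult by simp

lemma support_sub_Lam: "eig_support A u \<subseteq> Lam A"
  using not_Lam_prj unfolding eig_support_def eproj_mult by blast

lemma mpow_mult:
  fixes A :: "real^'n^'n"
  assumes sym: "\<And>i j. A $ i $ j = A $ j $ i"
  shows "mpow A k *v x = (\<Sum>\<mu>\<in>Lam A. \<mu>^k *\<^sub>R prj (eigenspace A \<mu>) x)"
proof (induct k)
  case 0
  then show ?case using spectral_complete[OF sym, of x] by simp
next
  case (Suc k)
  have "mpow A (Suc k) *v x = A *v (mpow A k *v x)" by (simp add: matrix_vector_mul_assoc)
  also have "\<dots> = (\<Sum>\<mu>\<in>Lam A. \<mu>^k *\<^sub>R (A *v prj (eigenspace A \<mu>) x))"
    unfolding Suc mv_sum by (simp add: matrix_vector_mult_scaleR)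
  also have "\<dots> = (\<Sum>\<mu>\<in>Lam A. \<mu>^Suc k *\<^sub>R prj (eigenspace A \<mu>) x)"
  proof (rule sum.cong[OF refl])
    fix \<mu>
    have "A *v prj (eigenspace A \<mu>) x = \<mu> *\<^sub>R prj (eigenspace A \<mu>) x"
      using prj_props(1)[OF subspace_eigenspace, of A \<mu> x] by (simp add: eigenspace_def)
    then show "\<mu>^k *\<^sub>R (A *v prj (eigenspace A \<mu>) x) = \<mu>^Suc k *\<^sub>R prj (eigenspace A \<mu>) x"
      by simp
  qed
  finally show ?case .
qed

lemma mpow_uu:
  fixes A :: "real^'n^'n"
  assumes sym: "\<And>i j. A $ i $ j = A $ j $ i"
  shows "mpow A k $ u $ u = (\<Sum>\<mu>\<in>eig_support A u. \<mu>^k * pp A u \<mu>)"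
proof -
  have "mpow A k $ u $ u = (mpow A k *v axis u 1) $ u"
    by (simp add: matrix_vector_mult_basis column_def)
  also have "\<dots> = (\<Sum>\<mu>\<in>Lam A. \<mu>^k * pp A u \<mu>)"
    unfolding mpow_mult[OF sym] pp_prj sum_component by simp
  also have "\<dots> = (\<Sum>\<mu>\<in>eig_support A u. \<mu>^k * pp A u \<mu>)"
  proof (rule sum.mono_neutral_right)
    show "finite (Lam A)" by (rule finite_Lam[OF sym])
    show "eig_support A u \<subseteq> Lam A" by (rule support_sub_Lam)
    show "\<forall>i\<in>Lam A - eig_support A u. i ^ k * pp A u i = 0"
    proof
      fix i assume "i \<in> Lam A - eig_support A u"
      then have "pp A u i = 0" using eig_support_pp[of i A u] by simp
      then show "i ^ k * pp A u i = 0" by simp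
    qed
  qed
  finally show ?thesis .
qed

lemma pp_sum1:
  fixes A :: "real^'n^'n"
  assumes sym: "\<And>i j. A $ i $ j = A $ j $ i"
  shows "(\<Sum>\<mu>\<in>eig_support A u. pp A u \<mu>) = 1"
proof -
  have m0: "mpow A 0 = mat 1" by simp
  have "mat (1::real) $ u $ u = (1::real)" unfolding mat_def by simp
  then have "mpow A 0 $ u $ u = 1" unfolding m0 .
  moreover have "mpow A 0 $ u $ u = (\<Sum>\<mu>\<in>eig_support A u. \<mu>^0 * pp A u \<mu>)"
    by (rule mpow_uu[OF sym])
  moreover have "(\<Sum>\<mu>\<in>eig_support A u. \<mu>^0 * pp A u \<mu>) = (\<Sum>\<mu>\<in>eig_support A u. pp A u \<mu>)"
    by simp
  ultimately show ?thesis by metis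
qed

lemma finite_support:
  fixes A :: "real^'n^'n"
  assumes sym: "\<And>i j. A $ i $ j = A $ j $ i"
  shows "finite (eig_support A u)"
  using finite_Lam[OF sym] support_sub_Lam finite_subset by blast

lemma transition_formula:
  fixes A :: "real^'n^'n"
  assumes sym: "\<And>i j. A $ i $ j = A $ j $ i"
  shows "transition A t u u = (\<Sum>\<mu>\<in>eig_support A u. complex_of_real (pp A u \<mu>) * exp (\<i> * complex_of_real (t * \<mu>)))"
proof -
  let ?F = "eig_support A u"
  have "(\<lambda>k. \<Sum>\<mu>\<in>?F. complex_of_real (pp A u \<mu>) * ((\<i> * complex_of_real (t * \<mu>))^k /\<^sub>R fact k))
        sums (\<Sum>\<mu>\<in>?F. complex_of_real (pp A u \<mu>) * exp (\<i> * complex_of_real (t * \<mu>)))"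
    by (intro sums_sum sums_mult exp_converges)
  moreover have "(\<Sum>\<mu>\<in>?F. complex_of_real (pp A u \<mu>) * ((\<i> * complex_of_real (t * \<mu>))^k /\<^sub>R fact k))
      = (\<i> * complex_of_real t) ^ k / fact k * complex_of_real (mpow A k $ u $ u)" for k
  proof -
    have trm: "complex_of_real (pp A u \<mu>) * ((\<i> * complex_of_real (t * \<mu>))^k /\<^sub>R fact k)
       = (\<i> * complex_of_real t) ^ k / fact k * complex_of_real (\<mu>^k * pp A u \<mu>)" for \<mu>
    proof -
      have a: "(\<i> * complex_of_real (t * \<mu>))^k = (\<i> * complex_of_real t) ^ k * complex_of_real \<mu> ^ k"
        by (simp add: power_mult_distrib)
      have b: "z /\<^sub>R fact k = z / fact k" for z :: complex
        by (simp add: scaleR_conv_of_real divide_inverse mult.commute)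
      show ?thesis unfolding a b by simp
    qed
    show ?thesis unfolding mpow_uu[OF sym] of_real_sum sum_distrib_left trm ..
  qed
  ultimately show ?thesis unfolding transition_def by (simp add: sums_iff)
qed

definition sg :: "'n set \<Rightarrow> 'n \<Rightarrow> real" where
  "sg S i = (if i \<in> S then 1 else -1)"

definition Dm :: "'n set \<Rightarrow> real^'n \<Rightarrow> real^'n" where
  "Dm S v = (\<chi> i. sg S i * v $ i)"

lemma sg_sq: "sg S i * sg S i = 1"
  unfolding sg_def by simp

lemma Dm_Dm: "Dm S (Dm S v) = v"
  unfolding Dm_def by (simp add: vec_eq_iff mult.assoc[symmetric] sg_sq)

lemma Dm_inner: "inner (Dm S a) (Dm S b) = inner a b"
proof -
  have "inner (Dm S a) (Dm S b) = (\<Sum>i\<in>UNIV. (sg S i * sg S i) * (a $ i * b $ i))"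
    unfolding Dm_def inner_vec_def by (simp add: algebra_simps)
  then show ?thesis unfolding sg_sq inner_vec_def by simp
qed

lemma Dm_axis: "Dm S (axis u 1) = sg S u *\<^sub>R axis u 1"
  unfolding Dm_def by (simp add: vec_eq_iff axis_def)

lemma Dm_eig:
  fixes A :: "real^'n^'n"
  assumes bip: "\<And>i j. A $ i $ j \<noteq> 0 \<Longrightarrow> (i \<in> S \<longleftrightarrow> j \<notin> S)"
    and v: "v \<in> eigenspace A \<mu>"
  shows "Dm S v \<in> eigenspace A (- \<mu>)"
proof -
  have key: "A $ i $ j * sg S j = - sg S i * A $ i $ j" for i j
  proof (cases "A $ i $ j = 0")
    case True then show ?thesis by simp
  next
    case False
    then have "i \<in> S \<longleftrightarrow> j \<notin> S" by (rule bip)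
    then show ?thesis unfolding sg_def by auto
  qed
  have Av: "(\<Sum>j\<in>UNIV. A $ i $ j * v $ j) = \<mu> * v $ i" for i
  proof -
    have "(A *v v) $ i = (\<mu> *\<^sub>R v) $ i" using v by (simp add: eigenspace_def)
    then show ?thesis by (simp add: matrix_vector_mult_def)
  qed
  have "(A *v Dm S v) $ i = ((- \<mu>) *\<^sub>R Dm S v) $ i" for i
  proof -
    have "(A *v Dm S v) $ i = (\<Sum>j\<in>UNIV. (A $ i $ j * sg S j) * v $ j)"
      unfolding Dm_def by (simp add: matrix_vector_mult_def mult.assoc)
    also have "\<dots> = (\<Sum>j\<in>UNIV. - sg S i * (A $ i $ j * v $ j))"
      unfolding key by (simp add: mult.assoc)
    also have "\<dots> = - sg S i * (\<Sum>j\<in>UNIV. A $ i $ j * v $ j)"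
      by (simp add: sum_distrib_left)
    also have "\<dots> = ((- \<mu>) *\<^sub>R Dm S v) $ i"
      unfolding Av Dm_def by simp
    finally show ?thesis .
  qed
  then show ?thesis by (simp add: eigenspace_def vec_eq_iff)
qed

lemma prj_neg:
  fixes A :: "real^'n^'n"
  assumes bip: "\<And>i j. A $ i $ j \<noteq> 0 \<Longrightarrow> (i \<in> S \<longleftrightarrow> j \<notin> S)"
  shows "prj (eigenspace A (- \<mu>)) x = Dm S (prj (eigenspace A \<mu>) (Dm S x))"
proof (rule prj_unique[OF subspace_eigenspace])
  show "Dm S (prj (eigenspace A \<mu>) (Dm S x)) \<in> eigenspace A (- \<mu>)"
    by (rule Dm_eig[OF bip prj_props(1)[OF subspace_eigenspace]])
  fix z assume z: "z \<in> eigenspace A (- \<mu>)"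
  have Dz: "Dm S z \<in> eigenspace A \<mu>" using Dm_eig[OF bip z] by simp
  have "inner (x - Dm S (prj (eigenspace A \<mu>) (Dm S x))) z
      = inner (Dm S (x - Dm S (prj (eigenspace A \<mu>) (Dm S x)))) (Dm S z)"
    by (simp add: Dm_inner)
  also have "Dm S (x - Dm S (prj (eigenspace A \<mu>) (Dm S x))) = Dm S x - prj (eigenspace A \<mu>) (Dm S x)"
    unfolding Dm_def by (simp add: vec_eq_iff right_diff_distrib mult.assoc[symmetric] sg_sq)
  also have "inner (Dm S x - prj (eigenspace A \<mu>) (Dm S x)) (Dm S z) = 0"
    by (rule prj_props(2)[OF subspace_eigenspace Dz])
  finally show "inner (x - Dm S (prj (eigenspace A \<mu>) (Dm S x))) z = 0" .
qed

lemma pp_neg: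
  fixes A :: "real^'n^'n"
  assumes bip: "\<And>i j. A $ i $ j \<noteq> 0 \<Longrightarrow> (i \<in> S \<longleftrightarrow> j \<notin> S)"
  shows "pp A u (- \<mu>) = pp A u \<mu>"
proof -
  have lin: "linear (prj (eigenspace A \<mu>))" by (rule prj_linear[OF subspace_eigenspace])
  have "pp A u (- \<mu>) = Dm S (prj (eigenspace A \<mu>) (sg S u *\<^sub>R axis u 1)) $ u"
    unfolding pp_prj using prj_neg[OF bip, where \<mu>=\<mu> and x="axis u 1"] Dm_axis[of S u] by simp
  also have "\<dots> = sg S u * (sg S u * prj (eigenspace A \<mu>) (axis u 1) $ u)"
    unfolding linear_cmul[OF lin] Dm_def by simp
  also have "\<dots> = pp A u \<mu>" unfolding pp_prj by (simp add: mult.assoc[symmetric] sg_sq)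
  finally show ?thesis .
qed

lemma abstract_main:
  fixes F :: "real set" and p :: "real \<Rightarrow> real" and g :: "real \<Rightarrow> complex"
  assumes fin: "finite F" and Fp: "\<And>\<mu>. \<mu> \<in> F \<longleftrightarrow> p \<mu> \<noteq> 0"
    and pn: "\<And>\<mu>. p \<mu> \<ge> 0" and psym: "\<And>\<mu>. p (- \<mu>) = p \<mu>"
    and p1: "(\<Sum>\<mu>\<in>F. p \<mu>) = 1" and F0: "0 \<in> F" and p0: "p 0 < 1/2"
    and g: "\<And>t. g t = (\<Sum>\<mu>\<in>F. complex_of_real (p \<mu>) * exp (\<i> * complex_of_real (t * \<mu>)))"
    and T: "T > 0" "\<And>\<mu>. \<mu> \<in> F \<Longrightarrow> \<mu> > 0 \<Longrightarrow> cos (T * \<mu>) \<le> -1 + (1 - 2 * p 0) / 2"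
  shows "(INF t\<in>{0<..}. cmod (g t)) = 0"
proof -
  define h where "h t = (\<Sum>\<mu>\<in>F. p \<mu> * cos (t * \<mu>))" for t
  define \<delta> where "\<delta> = (1 - 2 * p 0) / 2"
  have Fneg: "- \<mu> \<in> F \<longleftrightarrow> \<mu> \<in> F" for \<mu> using Fp psym by simp
  have imF: "uminus ` F = F"
  proof
    show "uminus ` F \<subseteq> F" using Fneg by auto
    show "F \<subseteq> uminus ` F"
    proof
      fix x assume "x \<in> F"
      then have "- x \<in> F" using Fneg by simp
      then show "x \<in> uminus ` F" by (metis image_eqI minus_minus)
    qed
  qed
  have sinsum: "(\<Sum>\<mu>\<in>F. p \<mu> * sin (t * \<mu>)) = 0" for t
  proof -
    have "(\<Sum>\<mu>\<in>F. p \<mu> * sin (t * \<mu>)) = (\<Sum>\<mu>\<in>uminus ` F. p \<mu> * sin (t * \<mu>))"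
      unfolding imF ..
    also have "\<dots> = (\<Sum>\<mu>\<in>F. p (- \<mu>) * sin (t * (- \<mu>)))"
      by (subst sum.reindex) (auto simp: inj_on_def)
    also have "\<dots> = - (\<Sum>\<mu>\<in>F. p \<mu> * sin (t * \<mu>))"
      unfolding psym by (simp add: sum_negf)
    finally show ?thesis by simp
  qed
  have gh: "g t = complex_of_real (h t)" for t
  proof -
    have "g t = (\<Sum>\<mu>\<in>F. complex_of_real (p \<mu>) * cis (t * \<mu>))"
      unfolding g by (simp add: cis_conv_exp)
    also have "\<dots> = Complex (h t) (\<Sum>\<mu>\<in>F. p \<mu> * sin (t * \<mu>))"
      unfolding h_def by (simp add: complex_eq_iff Re_sum Im_sum)
    also have "\<dots> = complex_of_real (h t)" unfolding sinsum by (simp add: complex_eq_iff)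
    finally show ?thesis .
  qed
  have h0: "h 0 = 1" unfolding h_def using p1 by simp
  have hcont: "continuous_on {0..T} h" unfolding h_def by (intro continuous_intros)
  have hT: "h T < 0"
  proof -
    have c: "p \<mu> * cos (T * \<mu>) \<le> p \<mu> * (\<delta> - 1)" if "\<mu> \<in> F - {0}" for \<mu>
    proof -
      have "cos (T * \<mu>) \<le> \<delta> - 1"
      proof (cases "\<mu> > 0")
        case True then show ?thesis using T(2) that unfolding \<delta>_def by auto
      next
        case False
        then have "- \<mu> > 0" using that by auto
        moreover have "- \<mu> \<in> F" using that Fneg by auto
        ultimately have "cos (T * (- \<mu>)) \<le> -1 + (1 - 2 * p 0) / 2" by (rule T(2)[rotated])
        then show ?thesis unfolding \<delta>_def by simp
      qed
      then show ?thesis using pn[of \<mu>] by (rule mult_left_mono)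
    qed
    have "h T = p 0 + (\<Sum>\<mu>\<in>F - {0}. p \<mu> * cos (T * \<mu>))"
      unfolding h_def using fin F0 by (simp add: sum.remove)
    also have "\<dots> \<le> p 0 + (\<Sum>\<mu>\<in>F - {0}. p \<mu> * (\<delta> - 1))"
      using c by (intro add_left_mono sum_mono) auto
    also have "(\<Sum>\<mu>\<in>F - {0}. p \<mu> * (\<delta> - 1)) = (1 - p 0) * (\<delta> - 1)"
    proof -
      have "(\<Sum>\<mu>\<in>F - {0}. p \<mu>) = 1 - p 0" using p1 fin F0 by (simp add: sum.remove)
      then show ?thesis by (simp add: sum_distrib_right[symmetric])
    qed
    finally have "h T \<le> p 0 + (1 - p 0) * (\<delta> - 1)" .
    moreover have "p 0 + (1 - p 0) * (\<delta> - 1) < 0"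
    proof -
      have "(1 - p 0) * \<delta> \<le> \<delta>" using pn[of 0] p0 unfolding \<delta>_def
        by (simp add: mult_le_cancel_right1)
      moreover have "(1 - p 0) * (\<delta> - 1) = (1 - p 0) * \<delta> - (1 - p 0)"
        by (simp add: right_diff_distrib)
      moreover have "\<delta> > 0" "1 - 2 * p 0 = 2 * \<delta>" using p0 unfolding \<delta>_def by auto
      ultimately show ?thesis by linarith
    qed
    ultimately show ?thesis by linarith
  qed
  obtain x where x: "0 \<le> x" "x \<le> T" "h x = 0"
    using IVT2'[of h T 0 0] hT h0 T(1) hcont by auto
  have x0: "x > 0" using x h0 by (cases "x = 0") auto
  have nn: "\<And>t. t \<in> {0<..} \<Longrightarrow> 0 \<le> cmod (g t)" by simp
  have "(INF t\<in>{0<..}. cmod (g t)) \<le> cmod (g x)"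
    by (rule cINF_lower) (use x0 in \<open>auto intro: bdd_belowI2[of _ 0]\<close>)
  also have "cmod (g x) = 0" unfolding gh x by simp
  finally have le: "(INF t\<in>{0<..}. cmod (g t)) \<le> 0" .
  have "0 \<le> (INF t\<in>{0<..}. cmod (g t))"
    by (rule cINF_greatest) (use x0 in auto)
  with le show ?thesis by linarith
qed

lemma T_case1:
  assumes "Fp = {l}" "l > (0::real)" "\<delta> \<ge> 0"
  shows "\<exists>T>0. \<forall>\<mu>\<in>Fp. cos (T * \<mu>) \<le> -1 + \<delta>"
proof (intro exI conjI ballI)
  show "pi / l > 0" using assms by simp
  fix \<mu> assume "\<mu> \<in> Fp"
  then have "\<mu> = l" using assms by simp
  then have "cos (pi / l * \<mu>) = -1" using assms by simp
  then show "cos (pi / l * \<mu>) \<le> -1 + \<delta>" using assms by simp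
qed

lemma T_case2i:
  assumes m: "\<forall>\<mu>\<in>Fp. \<exists>k::int. \<mu> = of_int k \<and> multiplicity 2 k = m"
    and pos: "\<And>\<mu>. \<mu> \<in> Fp \<Longrightarrow> \<mu> > (0::real)" and "\<delta> \<ge> 0"
  shows "\<exists>T>0. \<forall>\<mu>\<in>Fp. cos (T * \<mu>) \<le> -1 + \<delta>"
proof (intro exI conjI ballI)
  show "pi / 2^m > 0" by simp
  fix \<mu> assume mu: "\<mu> \<in> Fp"
  then obtain k :: int where k: "\<mu> = of_int k" "multiplicity 2 k = m" using m by blast
  have "k \<noteq> 0" using pos[OF mu] k by auto
  moreover have "\<not> is_unit (2::int)" by simp
  ultimately obtain y where y: "k = 2 ^ multiplicity 2 k * y" "\<not> 2 dvd y"
    using multiplicity_decompose'[of k 2] by blast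
  have "pi / 2^m * \<mu> = pi * of_int y"
    using y(1) k by (simp add: field_simps)
  moreover have "cos (pi * of_int y) = -1" using y(2) by simp
  ultimately show "cos (pi / 2^m * \<mu>) \<le> -1 + \<delta>" using assms by simp
qed

lemma cos_near:
  fixes e \<epsilon> :: real
  assumes "\<bar>e\<bar> < \<epsilon>"
  shows "cos (2 * pi * e) \<ge> 1 - 2 * (4 * \<epsilon>)^2"
proof -
  have "cos (2 * pi * e) = 1 - 2 * sin (pi * e) ^ 2"
    using cos_double_sin[of "pi * e"] by (simp add: mult.assoc)
  moreover have "sin (pi * e) ^ 2 \<le> (4 * \<epsilon>)^2"
  proof -
    have "\<bar>sin (pi * e)\<bar> \<le> \<bar>pi * e\<bar>" by (rule abs_sin_x_le_abs_x)
    also have "\<dots> = pi * \<bar>e\<bar>" by (simp add: abs_mult)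
    also have "\<dots> \<le> 4 * \<epsilon>" using pi_less_4 assms pi_gt_zero
      by (intro mult_mono) auto
    finally have "\<bar>sin (pi * e)\<bar> \<le> 4 * \<epsilon>" .
    then show ?thesis by (metis abs_ge_zero order_trans power2_abs power_mono)
  qed
  ultimately show ?thesis by simp
qed

lemma int_half: "\<bar>real_of_int k + 1/2\<bar> \<ge> 1/2"
proof (cases "k \<ge> 0")
  case True then show ?thesis by simp
next
  case False then have "real_of_int k \<le> -1" by simp
  then show ?thesis by simp
qed

lemma T_case2ii:
  fixes Fp :: "real set"
  assumes fin: "finite Fp" and ne: "Fp \<noteq> {}"
    and indep: "\<forall>c. (\<forall>\<mu>\<in>Fp. c \<mu> \<in> \<rat>) \<longrightarrow> (\<Sum>\<mu>\<in>Fp. c \<mu> * \<mu>) = 0 \<longrightarrow> (\<forall>\<mu>\<in>Fp. c \<mu> = 0)"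
    and d: "\<delta> > 0"
  shows "\<exists>T>0. \<forall>\<mu>\<in>Fp. cos (T * \<mu>) \<le> -1 + \<delta>"
proof -
  define n where "n = card Fp"
  obtain \<theta> where bij: "bij_betw \<theta> {0..<n} Fp" using ex_bij_betw_nat_finite[OF fin] unfolding n_def by blast
  have inj: "inj_on \<theta> {..<n}" using bij by (simp add: bij_betw_def atLeast0LessThan)
  have im: "\<theta> ` {..<n} = Fp" using bij by (simp add: bij_betw_def atLeast0LessThan)
  have n0: "n > 0" unfolding n_def using fin ne by (simp add: card_gt_0_iff)
  interpret m: Modules.module "(\<lambda>r. (*) (real_of_int r))"
    by (simp add: Modules.module.intro distrib_left mult.commute)
  have indp: "module.independent (\<lambda>r. (*) (real_of_int r)) (\<theta> ` {..<n})"
    unfolding im m.independent_explicit_module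
  proof (intro allI impI)
    fix t u v assume t: "finite t" "t \<subseteq> Fp" "(\<Sum>v\<in>t. real_of_int (u v) * v) = 0" "v \<in> t"
    define c where "c \<mu> = (if \<mu> \<in> t then real_of_int (u \<mu>) else 0)" for \<mu>
    have cQ: "\<forall>\<mu>\<in>Fp. c \<mu> \<in> \<rat>" unfolding c_def by auto
    have "(\<Sum>\<mu>\<in>Fp. c \<mu> * \<mu>) = (\<Sum>\<mu>\<in>t. c \<mu> * \<mu>)"
      using t fin unfolding c_def by (intro sum.mono_neutral_right) auto
    also have "\<dots> = (\<Sum>v\<in>t. real_of_int (u v) * v)" unfolding c_def by simp
    finally have "(\<Sum>\<mu>\<in>Fp. c \<mu> * \<mu>) = 0" using t(3) by simp
    then have "c v = 0" using indep cQ t by blast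
    then show "u v = 0" using t(4) unfolding c_def by simp
  qed
  define e0 where "e0 = min \<delta> 1"
  define \<epsilon> where "\<epsilon> = e0 / 16"
  have e0: "e0 > 0" "e0 \<le> 1" "e0 \<le> \<delta>" unfolding e0_def using d by auto
  have \<epsilon>: "\<epsilon> > 0" unfolding \<epsilon>_def using e0 by simp
  obtain t h where th: "\<And>i. i < n \<Longrightarrow> \<bar>t * \<theta> i - of_int (h i) - 1/2\<bar> < \<epsilon>"
    using Kronecker_thm_1[OF indp inj \<epsilon>, of "\<lambda>_. 1/2"] by blast
  have t0: "t \<noteq> 0"
  proof
    assume "t = 0"
    then have "\<bar>- of_int (h 0) - 1/2\<bar> < \<epsilon>" using th[OF n0] by simp
    moreover have "\<bar>- real_of_int (h 0) - 1/2\<bar> = \<bar>real_of_int (h 0) + 1/2\<bar>" by linarith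
    moreover have "\<epsilon> < 1/2" unfolding \<epsilon>_def using e0 by simp
    ultimately show False using int_half[of "h 0"] by linarith
  qed
  show ?thesis
  proof (intro exI conjI ballI)
    show "2 * pi * \<bar>t\<bar> > 0" using t0 by simp
    fix \<mu> assume "\<mu> \<in> Fp"
    then obtain i where i: "i < n" "\<mu> = \<theta> i" using im by auto
    define e where "e = t * \<mu> - of_int (h i) - 1/2"
    have ee: "\<bar>e\<bar> < \<epsilon>" unfolding e_def i(2) using th[OF i(1)] .
    have c1: "cos (2 * pi * \<bar>t\<bar> * \<mu>) = cos (2 * pi * (t * \<mu>))"
    proof (cases "t \<ge> 0")
      case True then show ?thesis by (simp add: mult.assoc)
    next
      case False
      then have "2 * pi * \<bar>t\<bar> * \<mu> = - (2 * pi * (t * \<mu>))" by simp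
      then show ?thesis by (metis cos_minus)
    qed
    have "2 * pi * (t * \<mu>) = (2 * pi) * of_int (h i) + (pi + 2 * pi * e)"
      unfolding e_def by (simp add: algebra_simps)
    then have "cos (2 * pi * (t * \<mu>)) = cos (pi + 2 * pi * e)"
      by (simp add: cos_add)
    also have "\<dots> = - cos (2 * pi * e)" by simp
    finally have c2: "cos (2 * pi * \<bar>t\<bar> * \<mu>) = - cos (2 * pi * e)" using c1 by simp
    have "cos (2 * pi * e) \<ge> 1 - 2 * (4 * \<epsilon>)^2" by (rule cos_near[OF ee])
    moreover have "2 * (4 * \<epsilon>)^2 \<le> \<delta>"
    proof -
      have "2 * (4 * \<epsilon>)^2 = e0 * e0 / 8" unfolding \<epsilon>_def by (simp add: power2_eq_square)
      also have "\<dots> \<le> e0 / 8" using e0 by (simp add: mult_le_cancel_left1 divide_right_mono)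
      also have "\<dots> \<le> \<delta>" using e0 by simp
      finally show ?thesis .
    qed
    ultimately show "cos (2 * pi * \<bar>t\<bar> * \<mu>) \<le> -1 + \<delta>" unfolding c2 by linarith
  qed
qed

theorem corollary18:
  fixes A :: "real^'n^'n" and u :: 'n
  assumes "weighted_graph A" and "graph_connected A" and "graph_bipartite A"
    and "0 \<in> eig_support A u"
    and "eproj A 0 $ u $ u < 1/2"
    and "card {\<mu>\<in>eig_support A u. \<mu> > 0} = 1
         \<or> (card {\<mu>\<in>eig_support A u. \<mu> > 0} \<ge> 2 \<and>
             ((\<exists>m. \<forall>\<mu>\<in>{\<mu>\<in>eig_support A u. \<mu> > 0}.
                  \<exists>k::int. \<mu> = of_int k \<and> multiplicity 2 k = m)
              \<or> (\<forall>c. (\<forall>\<mu>\<in>{\<mu>\<in>eig_support A u. \<mu> > 0}. c \<mu> \<in> \<rat>) \<longrightarrow>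
                    (\<Sum>\<mu>\<in>{\<mu>\<in>eig_support A u. \<mu> > 0}. c \<mu> * \<mu>) = 0 \<longrightarrow>
                    (\<forall>\<mu>\<in>{\<mu>\<in>eig_support A u. \<mu> > 0}. c \<mu> = 0))))"
  shows "\<not> sedentary A u"
proof -
  have sym: "\<And>i j. A $ i $ j = A $ j $ i" using assms(1) unfolding weighted_graph_def by blast
  obtain S where bip: "\<And>i j. A $ i $ j \<noteq> 0 \<Longrightarrow> (i \<in> S \<longleftrightarrow> j \<notin> S)"
    using assms(3) unfolding graph_bipartite_def by blast
  define F where "F = eig_support A u"
  define Fp where "Fp = {\<mu>\<in>eig_support A u. \<mu> > 0}"
  define \<delta> where "\<delta> = (1 - 2 * pp A u 0) / 2"
  have p0: "pp A u 0 < 1/2" using assms(5) unfolding pp_def .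
  have d: "\<delta> > 0" unfolding \<delta>_def using p0 by simp
  have finF: "finite F" unfolding F_def by (rule finite_support[OF sym])
  have finFp: "finite Fp" unfolding Fp_def using finF F_def by simp
  have Fppos: "\<And>\<mu>. \<mu> \<in> Fp \<Longrightarrow> \<mu> > 0" unfolding Fp_def by simp
  have "\<exists>T>0. \<forall>\<mu>\<in>Fp. cos (T * \<mu>) \<le> -1 + \<delta>"
  proof (cases "card Fp = 1")
    case True
    then obtain l where l: "Fp = {l}" by (rule card_1_singletonE)
    then have "l > 0" using Fppos by simp
    then show ?thesis using T_case1[OF l _ less_imp_le[OF d]] by blast
  next
    case False
    then have c2: "(\<exists>m. \<forall>\<mu>\<in>Fp. \<exists>k::int. \<mu> = of_int k \<and> multiplicity 2 k = m)
       \<or> (\<forall>c. (\<forall>\<mu>\<in>Fp. c \<mu> \<in> \<rat>) \<longrightarrow> (\<Sum>\<mu>\<in>Fp. c \<mu> * \<mu>) = 0 \<longrightarrow> (\<forall>\<mu>\<in>Fp. c \<mu> = 0))"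
      and cge: "card Fp \<ge> 2"
      using assms(6) unfolding Fp_def by auto
    have ne: "Fp \<noteq> {}" using cge by auto
    from c2 show ?thesis
    proof
      assume "\<exists>m. \<forall>\<mu>\<in>Fp. \<exists>k::int. \<mu> = of_int k \<and> multiplicity 2 k = m"
      then obtain m where "\<forall>\<mu>\<in>Fp. \<exists>k::int. \<mu> = of_int k \<and> multiplicity 2 k = m" by blast
      then show ?thesis using T_case2i[OF _ Fppos less_imp_le[OF d]] by blast
    next
      assume "\<forall>c. (\<forall>\<mu>\<in>Fp. c \<mu> \<in> \<rat>) \<longrightarrow> (\<Sum>\<mu>\<in>Fp. c \<mu> * \<mu>) = 0 \<longrightarrow> (\<forall>\<mu>\<in>Fp. c \<mu> = 0)"
      then show ?thesis using T_case2ii[OF finFp ne _ d] by blast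
    qed
  qed
  then obtain T where T: "T > 0" "\<And>\<mu>. \<mu> \<in> Fp \<Longrightarrow> cos (T * \<mu>) \<le> -1 + \<delta>" by blast
  have "(INF t\<in>{0<..}. cmod (transition A t u u)) = 0"
  proof (rule abstract_main[where F = F and p = "pp A u"])
    show "finite F" by (rule finF)
    show "\<And>\<mu>. \<mu> \<in> F \<longleftrightarrow> pp A u \<mu> \<noteq> 0" unfolding F_def by (rule eig_support_pp)
    show "\<And>\<mu>. pp A u \<mu> \<ge> 0" by (rule pp_nonneg)
    show "\<And>\<mu>. pp A u (- \<mu>) = pp A u \<mu>" by (rule pp_neg[OF bip])
    show "(\<Sum>\<mu>\<in>F. pp A u \<mu>) = 1" unfolding F_def by (rule pp_sum1[OF sym])
    show "0 \<in> F" unfolding F_def by (rule assms(4))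
    show "pp A u 0 < 1/2" by (rule p0)
    show "\<And>t. transition A t u u = (\<Sum>\<mu>\<in>F. complex_of_real (pp A u \<mu>) * exp (\<i> * complex_of_real (t * \<mu>)))"
      unfolding F_def by (rule transition_formula[OF sym])
    show "T > 0" by (rule T(1))
    show "\<And>\<mu>. \<mu> \<in> F \<Longrightarrow> \<mu> > 0 \<Longrightarrow> cos (T * \<mu>) \<le> -1 + (1 - 2 * pp A u 0) / 2"
      using T(2) unfolding Fp_def F_def \<delta>_def by blast
  qed
  then show ?thesis unfolding sedentary_def by simp
qed

end
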